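(* Let $G$ be a simple plane graph on $n\geq 2$ vertices that contains neither $K_4$ nor $C_5$ as a subgraph, and such that every maximal $2$-connected subgraph of $G$ has at most $4$ vertices. Then $e(G)\leq 2n-\frac{15}{7}$.
   Context: $K_4$ is the complete graph on $4$ vertices, $C_5$ the cycle on $5$ vertices; $e(G)$ is the number of edges of $G$. A maximal $2$-connected subgraph (a block) is understood in the usual sense, where a single edge (bridge) counts as a block on $2$ vertices. *)

theory Defs
  imports "HOL-Analysis.Analysis"
begin

definition simple_graph :: "'a set \<Rightarrow> 'a set set \<Rightarrow> bool" where
  "simple_graph V E \<longleftrightarrow> finite V \<and> (\<forall>e\<in>E. \<exists>u v. u \<in> V \<and> v \<in> V \<and> u \<noteq> v \<and> e = {u, v})"

definition plane_embedding :: "'a set \<Rightarrow> 'a set set \<Rightarrow> ('a \<Rightarrow> complex) \<Rightarrow> ('a set \<Rightarrow> real \<Rightarrow> complex) \<Rightarrow> bool" where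
  "plane_embedding V E f \<gamma> \<longleftrightarrow>
     inj_on f V \<and>
     (\<forall>e\<in>E. arc (\<gamma> e) \<and> {pathstart (\<gamma> e), pathfinish (\<gamma> e)} = f ` e
             \<and> path_image (\<gamma> e) \<inter> f ` V = f ` e) \<and>
     (\<forall>e\<in>E. \<forall>e'\<in>E. e \<noteq> e' \<longrightarrow> path_image (\<gamma> e) \<inter> path_image (\<gamma> e') \<subseteq> f ` (e \<inter> e'))"

definition plane_graph :: "'a set \<Rightarrow> 'a set set \<Rightarrow> bool" where
  "plane_graph V E \<longleftrightarrow> simple_graph V E \<and> (\<exists>f \<gamma>. plane_embedding V E f \<gamma>)"

definition has_K4 :: "'a set \<Rightarrow> 'a set set \<Rightarrow> bool" where
  "has_K4 V E \<longleftrightarrow> (\<exists>S. S \<subseteq> V \<and> card S = 4 \<and> (\<forall>u\<in>S. \<forall>v\<in>S. u \<noteq> v \<longrightarrow> {u, v} \<in> E))"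

definition has_C5 :: "'a set \<Rightarrow> 'a set set \<Rightarrow> bool" where
  "has_C5 V E \<longleftrightarrow> (\<exists>c :: nat \<Rightarrow> 'a. inj_on c {0..<5} \<and> c ` {0..<5} \<subseteq> V \<and>
       (\<forall>i<5. {c i, c ((i + 1) mod 5)} \<in> E))"

definition adj_on :: "'a set set \<Rightarrow> 'a set \<Rightarrow> ('a \<times> 'a) set" where
  "adj_on E S = {(u, v). u \<in> S \<and> v \<in> S \<and> {u, v} \<in> E}"

definition connected_on :: "'a set set \<Rightarrow> 'a set \<Rightarrow> bool" where
  "connected_on E S \<longleftrightarrow> (\<forall>u\<in>S. \<forall>v\<in>S. (u, v) \<in> (adj_on E S)\<^sup>*)"

text \<open>2-connected in the block sense: at least 2 vertices, connected, no cut vertex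
  (so a single edge counts).\<close>
definition two_connected_on :: "'a set set \<Rightarrow> 'a set \<Rightarrow> bool" where
  "two_connected_on E S \<longleftrightarrow> card S \<ge> 2 \<and> connected_on E S \<and> (\<forall>x\<in>S. connected_on E (S - {x}))"

definition is_block :: "'a set \<Rightarrow> 'a set set \<Rightarrow> 'a set \<Rightarrow> bool" where
  "is_block V E B \<longleftrightarrow> B \<subseteq> V \<and> two_connected_on E B \<and>
     (\<forall>B'. B \<subseteq> B' \<and> B' \<subseteq> V \<and> two_connected_on E B' \<longrightarrow> B' = B)"

end

theory Submission
  imports Defs
begin

definition Ein :: "'a set set \<Rightarrow> 'a set \<Rightarrow> 'a set set" where
  "Ein E W = {e\<in>E. e \<subseteq> W}"

lemma disconn_split:
  assumes "\<not> connected_on E S"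
  shows "\<exists>A B. S = A \<union> B \<and> A \<inter> B = {} \<and> A \<noteq> {} \<and> B \<noteq> {} \<and>
     (\<forall>p q. {p,q} \<in> E \<longrightarrow> p \<in> A \<longrightarrow> q \<in> S \<longrightarrow> q \<in> A)"
proof -
  let ?R = "adj_on E S"
  obtain u v where uv: "u \<in> S" "v \<in> S" "(u,v) \<notin> ?R\<^sup>*"
    using assms unfolding connected_on_def by blast
  define A where "A = {w\<in>S. (u,w) \<in> ?R\<^sup>*}"
  have "u \<in> A" using uv unfolding A_def by auto
  moreover have "v \<in> S - A" using uv unfolding A_def by auto
  moreover have "\<forall>p q. {p,q} \<in> E \<longrightarrow> p \<in> A \<longrightarrow> q \<in> S \<longrightarrow> q \<in> A"
  proof (intro allI impI)
    fix p q assume h: "{p,q} \<in> E" "p \<in> A" "q \<in> S"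
    then have "(p,q) \<in> ?R" unfolding A_def adj_on_def by auto
    with h show "q \<in> A" unfolding A_def
      by (auto intro: rtrancl_into_rtrancl)
  qed
  ultimately show ?thesis
    by (rule_tac x=A in exI, rule_tac x="S - A" in exI) (auto simp: A_def)
qed

lemma edge_form:
  assumes "simple_graph V E" "e \<in> E"
  obtains p q where "e = {p,q}" "p \<noteq> q" "p \<in> V" "q \<in> V"
  using assms unfolding simple_graph_def by blast

lemma split_W:
  assumes sg: "simple_graph V E" and W: "W \<subseteq> V" "card W \<ge> 2"
    and nt: "\<not> two_connected_on E W"
  shows "\<exists>A B. W = A \<union> B \<and> A - B \<noteq> {} \<and> B - A \<noteq> {} \<and> card (A \<inter> B) \<le> 1 \<and>
     Ein E W \<subseteq> Ein E A \<union> Ein E B"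
proof -
  have "\<not> connected_on E W \<or> (\<exists>x\<in>W. \<not> connected_on E (W - {x}))"
    using nt W unfolding two_connected_on_def by auto
  then show ?thesis
  proof
    assume "\<not> connected_on E W"
    from disconn_split[OF this] obtain A B where AB: "W = A \<union> B" "A \<inter> B = {}" "A \<noteq> {}" "B \<noteq> {}"
      and ed: "\<forall>p q. {p,q} \<in> E \<longrightarrow> p \<in> A \<longrightarrow> q \<in> W \<longrightarrow> q \<in> A" by blast
    have "Ein E W \<subseteq> Ein E A \<union> Ein E B"
    proof
      fix e assume e: "e \<in> Ein E W"
      then have "e \<in> E" "e \<subseteq> W" unfolding Ein_def by auto
      then obtain p q where pq: "e = {p,q}" using edge_form[OF sg] by metis
      have "{q,p} \<in> E" using \<open>e \<in> E\<close> pq by (simp add: insert_commute)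
      then show "e \<in> Ein E A \<union> Ein E B"
        using ed \<open>e \<in> E\<close> \<open>e \<subseteq> W\<close> pq AB unfolding Ein_def by blast
    qed
    then show ?thesis using AB by (rule_tac x=A in exI, rule_tac x=B in exI) auto
  next
    assume "\<exists>x\<in>W. \<not> connected_on E (W - {x})"
    then obtain x where x: "x \<in> W" "\<not> connected_on E (W - {x})" by blast
    from disconn_split[OF x(2)] obtain A B where AB: "W - {x} = A \<union> B" "A \<inter> B = {}" "A \<noteq> {}" "B \<noteq> {}"
      and ed: "\<forall>p q. {p,q} \<in> E \<longrightarrow> p \<in> A \<longrightarrow> q \<in> W - {x} \<longrightarrow> q \<in> A" by blast
    have "Ein E W \<subseteq> Ein E (A \<union> {x}) \<union> Ein E (B \<union> {x})"
    proof
      fix e assume e: "e \<in> Ein E W"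
      then have "e \<in> E" "e \<subseteq> W" unfolding Ein_def by auto
      then obtain p q where pq: "e = {p,q}" using edge_form[OF sg] by metis
      have "{q,p} \<in> E" using \<open>e \<in> E\<close> pq by (simp add: insert_commute)
      then show "e \<in> Ein E (A \<union> {x}) \<union> Ein E (B \<union> {x})"
        using ed \<open>e \<in> E\<close> \<open>e \<subseteq> W\<close> pq AB unfolding Ein_def by blast
    qed
    moreover have "(A \<union> {x}) \<inter> (B \<union> {x}) = {x}" using AB by auto
    moreover have "x \<notin> A" "x \<notin> B" using AB by auto
    ultimately show ?thesis using AB x
      by (rule_tac x="A \<union> {x}" in exI, rule_tac x="B \<union> {x}" in exI) auto
  qed
qed

lemma Ein_small:
  assumes sg: "simple_graph V E" and "finite A" "card A \<le> 1"
  shows "Ein E A = {}"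
proof (rule ccontr)
  assume "Ein E A \<noteq> {}"
  then obtain e where "e \<in> E" "e \<subseteq> A" unfolding Ein_def by auto
  then obtain p q where "e = {p,q}" "p \<noteq> q" using edge_form[OF sg] by metis
  then have "card e = 2" by simp
  moreover have "card e \<le> card A" using card_mono[OF assms(2) \<open>e \<subseteq> A\<close>] .
  ultimately show False using assms(3) by simp
qed

lemma Ein_finite: "finite W \<Longrightarrow> finite (Ein E W)"
  unfolding Ein_def by (rule finite_subset[of _ "Pow W"]) auto

lemma base_case:
  assumes sg: "simple_graph V E" and nk: "\<not> has_K4 V E" and W: "W \<subseteq> V" "card W \<ge> 2" "card W \<le> 4"
  shows "card (Ein E W) + 3 \<le> 2 * card W"
proof -
  have fW: "finite W" using W(2) card.infinite by fastforce
  have sub: "Ein E W \<subseteq> {B. B \<subseteq> W \<and> card B = 2}"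
  proof
    fix e assume "e \<in> Ein E W"
    then have "e \<in> E" "e \<subseteq> W" unfolding Ein_def by auto
    then obtain p q where "e = {p,q}" "p \<noteq> q" using edge_form[OF sg] by metis
    then show "e \<in> {B. B \<subseteq> W \<and> card B = 2}" using \<open>e \<subseteq> W\<close> by simp
  qed
  have fin: "finite {B. B \<subseteq> W \<and> card B = 2}" using fW by auto
  have cnt: "card {B. B \<subseteq> W \<and> card B = 2} = card W choose 2"
    using n_subsets[OF fW] by simp
  have le: "card (Ein E W) \<le> card W choose 2" using card_mono[OF fin sub] cnt by simp
  have ne: "card (Ein E W) \<noteq> card W choose 2 \<or> card W \<noteq> 4"
  proof (rule ccontr)
    assume "\<not> ?thesis"
    then have eq: "card (Ein E W) = card W choose 2" "card W = 4" by auto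
    then have "Ein E W = {B. B \<subseteq> W \<and> card B = 2}"
      using card_subset_eq[OF fin sub] cnt by simp
    then have "\<forall>u\<in>W. \<forall>v\<in>W. u \<noteq> v \<longrightarrow> {u, v} \<in> E"
      unfolding Ein_def by auto
    then have "has_K4 V E" unfolding has_K4_def using W eq(2) by blast
    then show False using nk by simp
  qed
  have "card W = 2 \<or> card W = 3 \<or> card W = 4" using W by auto
  then show ?thesis
  proof (elim disjE)
    assume "card W = 2" then show ?thesis using le by simp
  next
    assume "card W = 3" then show ?thesis using le by (simp add: numeral_eq_Suc)
  next
    assume h: "card W = 4"
    have "(4::nat) choose 2 = 6" by (simp add: numeral_eq_Suc)
    then show ?thesis using le ne h by simp
  qed
qed

lemma main_bound:
  assumes sg: "simple_graph V E" and nk: "\<not> has_K4 V E"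
    and hyp: "\<forall>S. S \<subseteq> V \<and> two_connected_on E S \<longrightarrow> card S \<le> 4"
  shows "W \<subseteq> V \<Longrightarrow> card W \<ge> 2 \<Longrightarrow> card (Ein E W) + 3 \<le> 2 * card W"
proof (induction "card W" arbitrary: W rule: less_induct)
  case less
  have fW: "finite W" using less.prems(2) card.infinite by fastforce
  show ?case
  proof (cases "two_connected_on E W")
    case True
    then have "card W \<le> 4" using hyp less.prems by blast
    then show ?thesis using base_case[OF sg nk] less.prems by blast
  next
    case False
    from split_W[OF sg less.prems False] obtain A B where AB: "W = A \<union> B" "A - B \<noteq> {}" "B - A \<noteq> {}"
      "card (A \<inter> B) \<le> 1" and sub: "Ein E W \<subseteq> Ein E A \<union> Ein E B" by blast
    have fA: "finite A" "finite B" using fW AB by auto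
    have AW: "A \<subset> W" "B \<subset> W" using AB by auto
    have ca: "card A < card W" "card B < card W" using AW fW psubset_card_mono by blast+
    have ia: "card (A \<inter> B) < card A" "card (A \<inter> B) < card B"
      using AB fA by (auto intro!: psubset_card_mono)
    have sum: "card A + card B = card W + card (A \<inter> B)"
      using card_Un_Int[OF fA] AB by simp
    have e: "card (Ein E W) \<le> card (Ein E A) + card (Ein E B)"
    proof -
      have "card (Ein E W) \<le> card (Ein E A \<union> Ein E B)"
        using sub Ein_finite fA by (intro card_mono) auto
      also have "\<dots> \<le> card (Ein E A) + card (Ein E B)" by (rule card_Un_le)
      finally show ?thesis .
    qed
    have bA: "card (Ein E A) + 3 \<le> 2 * card A \<or> (card A \<le> 1 \<and> card (Ein E A) = 0)"
    proof (cases "card A \<ge> 2")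
      case True then show ?thesis using less.hyps[OF ca(1)] AW less.prems by auto
    next
      case False then show ?thesis using Ein_small[OF sg fA(1)] by auto
    qed
    have bB: "card (Ein E B) + 3 \<le> 2 * card B \<or> (card B \<le> 1 \<and> card (Ein E B) = 0)"
    proof (cases "card B \<ge> 2")
      case True then show ?thesis using less.hyps[OF ca(2)] AW less.prems by auto
    next
      case False then show ?thesis using Ein_small[OF sg fA(2)] by auto
    qed
    show ?thesis using bA bB e sum ia AB(4) less.prems(2) by linarith
  qed
qed

lemma tc_in_block:
  assumes fV: "finite V" and S: "S \<subseteq> V" "two_connected_on E S"
  shows "\<exists>B. is_block V E B \<and> S \<subseteq> B"
proof -
  define F where "F = {B'. S \<subseteq> B' \<and> B' \<subseteq> V \<and> two_connected_on E B'}"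
  have sub: "F \<subseteq> Pow V" unfolding F_def by blast
  have fin: "finite F" using finite_subset[OF sub] fV by simp
  have ne: "S \<in> F" using S unfolding F_def by simp
  obtain m where m: "m \<in> F" "\<And>b. b \<in> F \<Longrightarrow> m \<subseteq> b \<Longrightarrow> m = b"
    using finite_has_maximal[OF fin] ne by blast
  have "is_block V E m" unfolding is_block_def
  proof (intro conjI allI impI)
    show "m \<subseteq> V" using m(1) unfolding F_def by simp
    show "two_connected_on E m" using m(1) unfolding F_def by simp
    fix B' assume h: "m \<subseteq> B' \<and> B' \<subseteq> V \<and> two_connected_on E B'"
    have "B' \<in> F" using h m(1) unfolding F_def by auto
    then show "B' = m" using m(2) h by metis
  qed
  moreover have "S \<subseteq> m" using m(1) unfolding F_def by simp
  ultimately show ?thesis by blast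
qed

theorem corollary2:
  fixes V :: "'a set" and E :: "'a set set"
  assumes "plane_graph V E"
    and "card V \<ge> 2"
    and "\<not> has_K4 V E"
    and "\<not> has_C5 V E"
    and "\<forall>B. is_block V E B \<longrightarrow> card B \<le> 4"
  shows "real (card E) \<le> 2 * real (card V) - 15 / 7"
proof -
  have sg: "simple_graph V E" using assms(1) unfolding plane_graph_def by simp
  have fV: "finite V" using sg unfolding simple_graph_def by simp
  have hyp: "\<forall>S. S \<subseteq> V \<and> two_connected_on E S \<longrightarrow> card S \<le> 4"
  proof (intro allI impI)
    fix S assume "S \<subseteq> V \<and> two_connected_on E S"
    then obtain B where "is_block V E B" "S \<subseteq> B" using tc_in_block[OF fV] by blast
    moreover have "finite B" using \<open>is_block V E B\<close> fV unfolding is_block_def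
      using finite_subset by blast
    ultimately show "card S \<le> 4" using assms(5) card_mono order_trans by blast
  qed
  have "Ein E V = E" unfolding Ein_def using sg unfolding simple_graph_def by auto
  then have "card E + 3 \<le> 2 * card V" using main_bound[OF sg assms(3) hyp, of V] assms(2) by simp
  then have "real (card E) + 3 \<le> 2 * real (card V)" by linarith
  then show ?thesis by simp
qed

end
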